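(* Let $k\geq3$, $A=\{0,1,\dots,k-1\}$, $N=k-1$ and let $T\colon A^{N^2}\to A$ be given by $T(x_{1,1},\dots,x_{1,N},\dots,x_{N,1},\dots,x_{N,N})=1$ if $x_{i,j}=i$ for all $i,j$ or $x_{i,j}=j$ for all $i,j$, and $0$ otherwise. Then for all $1\leq n<k-1$, \[\{T\}^{**(n)}=\{T\}^{*(1)*(n)}=J_n(A)\cup\{c^n_0\},\] where $c^n_0$ is the $n$-ary constant zero function and $J_n(A)$ the set of $n$-ary projections.
   Context: An $m$-ary $g$ commutes with an $n$-ary $h$ if $g\bigl((h((x_{ij})_{j}))_{i}\bigr)=h\bigl((g((x_{ij})_{i}))_{j}\bigr)$ for all $(x_{ij})\in A^{m\times n}$. For a set $F$ of finitary operations on $A$ (positive arity), $F^*$ is the set of all such operations commuting with every member of $F$, and $F^{(n)}$ the set of $n$-ary members of $F$. Superscripts apply from left to right, e.g. $\{T\}^{*(1)*(n)}=(((\{T\}^* )^{(1)})^* )^{(n)}$ and $\{T\}^{**(n)}=((\{T\}^* )^* )^{(n)}$. *)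

theory Defs
  imports Main
begin

text \<open>A finitary operation is
represented canonically as a pair (n, f) where n \<ge> 1 is the arity and
f :: nat list \<Rightarrow> nat is its table on argument lists of length n with entries in A;
outside such argument lists f is fixed to 0, so equal operations are equal pairs.\<close>

type_synonym operation = "nat \<times> (nat list \<Rightarrow> nat)"

definition valid_args :: "nat \<Rightarrow> nat \<Rightarrow> nat list \<Rightarrow> bool" where
  "valid_args k n xs \<longleftrightarrow> length xs = n \<and> set xs \<subseteq> {..<k}"

definition is_op :: "nat \<Rightarrow> operation \<Rightarrow> bool" where
  "is_op k p \<longleftrightarrow> fst p \<ge> 1
     \<and> (\<forall>xs. valid_args k (fst p) xs \<longrightarrow> snd p xs < k)
     \<and> (\<forall>xs. \<not> valid_args k (fst p) xs \<longrightarrow> snd p xs = 0)"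

definition commutes :: "nat \<Rightarrow> operation \<Rightarrow> operation \<Rightarrow> bool" where
  "commutes k p q \<longleftrightarrow> (let m = fst p; g = snd p; n = fst q; h = snd q in
     \<forall>x :: nat \<Rightarrow> nat \<Rightarrow> nat. (\<forall>i<m. \<forall>j<n. x i j < k) \<longrightarrow>
       g (map (\<lambda>i. h (map (\<lambda>j. x i j) [0..<n])) [0..<m])
       = h (map (\<lambda>j. g (map (\<lambda>i. x i j) [0..<m])) [0..<n]))"

definition centralizer :: "nat \<Rightarrow> operation set \<Rightarrow> operation set" where
  "centralizer k F = {p. is_op k p \<and> (\<forall>q\<in>F. commutes k p q)}"

definition arity_part :: "operation set \<Rightarrow> nat \<Rightarrow> operation set" where
  "arity_part F n = {p \<in> F. fst p = n}"

definition projections :: "nat \<Rightarrow> nat \<Rightarrow> operation set" where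
  "projections k n = {(n, \<lambda>xs. if valid_args k n xs then xs ! i else 0) | i. i < n}"

definition const_zero :: "nat \<Rightarrow> operation" where
  "const_zero n = (n, \<lambda>_. 0)"

text \<open>The operation T of arity N^2, N = k-1; the argument x_{i,j} (1 \<le> i,j \<le> N)
sits at list position (i-1)*N + (j-1). T = 1 iff x_{i,j} = i for all i,j or
x_{i,j} = j for all i,j; otherwise 0.\<close>
definition T_op :: "nat \<Rightarrow> operation" where
  "T_op k = (let N = k - 1 in
     (N * N, \<lambda>xs. if valid_args k (N * N) xs \<and>
          ((\<forall>i<N. \<forall>j<N. xs ! (i * N + j) = i + 1) \<or>
           (\<forall>i<N. \<forall>j<N. xs ! (i * N + j) = j + 1))
        then 1 else 0))"

end

theory Submission
  imports Defs
begin

lemma pigeon: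
  fixes k :: nat and u f :: "nat \<Rightarrow> nat"
  assumes "k \<ge> 3" "u 0 = 0" "u 1 = 0" "\<forall>i<k-1. f i < k \<and> u (f i) = i + 1"
  shows False
proof -
  have inj: "inj_on f {..<k-1}"
  proof (rule inj_onI)
    fix a b assume "a \<in> {..<k-1}" "b \<in> {..<k-1}" "f a = f b"
    then show "a = b" using assms(4) by (metis Suc_eq_plus1 lessThan_iff nat.inject)
  qed
  have "f ` {..<k-1} \<subseteq> {2..<k}"
  proof
    fix y assume "y \<in> f ` {..<k-1}"
    then obtain i where i: "i < k-1" "y = f i" by auto
    then have "y < k" "u y = i + 1" using assms(4) by auto
    moreover have "y \<noteq> 0" "y \<noteq> 1" using assms(2,3) \<open>u y = i+1\<close> by (metis add_eq_0_iff_both_eq_0 one_neq_zero)+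
    ultimately show "y \<in> {2..<k}" by auto
  qed
  from card_inj_on_le[OF inj this] have "k - 1 \<le> k - 2" by simp
  then show False using assms(1) by simp
qed

lemma T_map_u:
  assumes "k \<ge> 3" "u 0 = 0" "u 1 = 0" "set ys \<subseteq> {..<k}"
  shows "snd (T_op k) (map u ys) = 0"
proof (rule ccontr)
  assume H: "snd (T_op k) (map u ys) \<noteq> 0"
  define N where "N = k - 1"
  have N2: "N \<ge> 2" using assms(1) N_def by simp
  from H have v: "valid_args k (N*N) (map u ys)" and
    pat: "(\<forall>i<N. \<forall>j<N. map u ys ! (i * N + j) = i + 1) \<or>
           (\<forall>i<N. \<forall>j<N. map u ys ! (i * N + j) = j + 1)"
    unfolding T_op_def Let_def N_def by (auto split: if_splits)
  have len: "length ys = N*N" using v unfolding valid_args_def by simp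
  have lt: "ys ! p < k" if "p < N*N" for p
  proof -
    have "ys ! p \<in> set ys" using that len by simp
    then show ?thesis using assms(4) by auto
  qed
  from pat show False
  proof
    assume P: "\<forall>i<N. \<forall>j<N. map u ys ! (i * N + j) = i + 1"
    have "\<forall>i<k-1. ys ! (i*N) < k \<and> u (ys ! (i*N)) = i + 1"
    proof (intro allI impI)
      fix i assume "i < k - 1"
      then have i: "i < N" using N_def by simp
      have idx: "i*N < N*N" using i N2 by simp
      have "map u ys ! (i*N+0) = i+1" using P[rule_format, of i 0] i N2 by simp
      then show "ys ! (i*N) < k \<and> u (ys ! (i*N)) = i + 1" using idx len lt by simp
    qed
    then show False using pigeon[OF assms(1,2,3), of "\<lambda>i. ys ! (i*N)"] by simp
  next
    assume P: "\<forall>i<N. \<forall>j<N. map u ys ! (i * N + j) = j + 1"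
    have "\<forall>i<k-1. ys ! i < k \<and> u (ys ! i) = i + 1"
    proof (intro allI impI)
      fix i assume "i < k - 1"
      then have i: "i < N" using N_def by simp
      have "N \<le> N*N" using N2 by simp
      then have idx: "i < N*N" using i by linarith
      have "map u ys ! (0*N+i) = i+1" using P[rule_format, of 0 i] i N2 by simp
      then show "ys ! i < k \<and> u (ys ! i) = i + 1" using idx len lt by simp
    qed
    then show False using pigeon[OF assms(1,2,3), of "\<lambda>i. ys ! i"] by simp
  qed
qed

lemma T_const:
  assumes "k \<ge> 3"
  shows "snd (T_op k) (replicate M a) = 0"
proof (rule ccontr)
  assume H: "snd (T_op k) (replicate M a) \<noteq> 0"
  define N where "N = k - 1"
  have N2: "N \<ge> 2" using assms(1) N_def by simp
  from H have v: "valid_args k (N*N) (replicate M a)" and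
    pat: "(\<forall>i<N. \<forall>j<N. replicate M a ! (i * N + j) = i + 1) \<or>
           (\<forall>i<N. \<forall>j<N. replicate M a ! (i * N + j) = j + 1)"
    unfolding T_op_def Let_def N_def by (auto split: if_splits)
  have M: "M = N*N" using v unfolding valid_args_def by simp
  have i1: "1*N+0 < N*N" using N2 by simp
  have i0: "0*N+0 < N*N" using N2 by simp
  have "N \<le> N*N" using N2 by simp
  then have i2: "0*N+1 < N*N" using N2 by linarith
  from pat show False
  proof
    assume P: "\<forall>i<N. \<forall>j<N. replicate M a ! (i * N + j) = i + 1"
    have "replicate M a ! (0*N+0) = 1" using P[rule_format, of 0 0] N2 by simp
    moreover have "replicate M a ! (1*N+0) = 2" using P[rule_format, of 1 0] N2 by simp
    ultimately show False using i0 i1 M by (simp del: mult_0 mult_1 add_0_right)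
  next
    assume P: "\<forall>i<N. \<forall>j<N. replicate M a ! (i * N + j) = j + 1"
    have "replicate M a ! (0*N+0) = 1" using P[rule_format, of 0 0] N2 by simp
    moreover have "replicate M a ! (0*N+1) = 2" using P[rule_format, of 0 1] N2 by simp
    ultimately show False using i0 i2 M by (simp del: mult_0 mult_1 add_0_right)
  qed
qed


lemma zero_fix:
  assumes "k \<ge> 3" "p \<in> centralizer k {T_op k}"
  shows "snd p (replicate (fst p) 0) = 0"
proof -
  have c: "commutes k p (T_op k)" using assms(2) unfolding centralizer_def by auto
  have "snd p (map (\<lambda>i. snd (T_op k) (map (\<lambda>j. (0::nat)) [0..<fst (T_op k)])) [0..<fst p])
      = snd (T_op k) (map (\<lambda>j. snd p (map (\<lambda>i. (0::nat)) [0..<fst p])) [0..<fst (T_op k)])"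
    using c[unfolded commutes_def Let_def, rule_format, of "\<lambda>i j. 0"] assms(1) by simp
  then show ?thesis using T_const[OF assms(1)] by (simp add: map_replicate_const)
qed

lemma proj_op:
  assumes "i < n"
  shows "is_op k (n, \<lambda>xs. if valid_args k n xs then xs ! i else 0)"
  using assms unfolding is_op_def valid_args_def
  by (auto intro!: subsetD[of _ "{..<k}"] nth_mem)

lemma proj_commutes:
  assumes "is_op k q" "i < n"
  shows "commutes k (n, \<lambda>xs. if valid_args k n xs then xs ! i else 0) q"
  unfolding commutes_def Let_def fst_conv snd_conv
proof (intro allI impI)
  fix x :: "nat \<Rightarrow> nat \<Rightarrow> nat"
  assume x: "\<forall>i<n. \<forall>j<fst q. x i j < k"
  have rowv: "\<And>i. i < n \<Longrightarrow> valid_args k (fst q) (map (x i) [0..<fst q])"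
    using x unfolding valid_args_def by auto
  have hv: "valid_args k n (map (\<lambda>i. snd q (map (x i) [0..<fst q])) [0..<n])"
    using rowv assms(1) unfolding valid_args_def is_op_def by auto
  have cv: "\<And>j. j < fst q \<Longrightarrow> valid_args k n (map (\<lambda>i. x i j) [0..<n])"
    using x unfolding valid_args_def by auto
  have E: "map (\<lambda>j. if valid_args k n (map (\<lambda>i. x i j) [0..<n]) then map (\<lambda>i. x i j) [0..<n] ! i else 0) [0..<fst q]
      = map (x i) [0..<fst q]"
    using cv assms(2) by auto
  then show "(if valid_args k n (map (\<lambda>i. snd q (map (\<lambda>j. x i j) [0..<fst q])) [0..<n])
         then map (\<lambda>i. snd q (map (\<lambda>j. x i j) [0..<fst q])) [0..<n] ! i else 0) =
        snd q (map (\<lambda>j. if valid_args k n (map (\<lambda>i. x i j) [0..<n]) then map (\<lambda>i. x i j) [0..<n] ! i else 0) [0..<fst q])"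
    unfolding E using hv assms(2) by simp
qed

lemma cz_op: "n \<ge> 1 \<Longrightarrow> k \<ge> 1 \<Longrightarrow> is_op k (const_zero n)"
  unfolding is_op_def const_zero_def by simp

lemma U_in:
  assumes "k \<ge> 3" "\<forall>j. u j < k" "u 0 = 0" "u 1 = 0"
  shows "(1, \<lambda>xs. if valid_args k 1 xs then u (hd xs) else 0) \<in> arity_part (centralizer k {T_op k}) 1"
proof -
  have op: "is_op k (1, \<lambda>xs. if valid_args k 1 xs then u (hd xs) else 0)"
    unfolding is_op_def using assms(2) by auto
  have Tle: "\<And>xs. snd (T_op k) xs \<le> 1" unfolding T_op_def Let_def by auto
  have "commutes k (1, \<lambda>xs. if valid_args k 1 xs then u (hd xs) else 0) (T_op k)"
    unfolding commutes_def Let_def fst_conv snd_conv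
  proof (intro allI impI)
    fix x :: "nat \<Rightarrow> nat \<Rightarrow> nat"
    assume x: "\<forall>i<1. \<forall>j<fst (T_op k). x i j < k"
    define row where "row = map (x 0) [0..<fst (T_op k)]"
    have rs: "set row \<subseteq> {..<k}" using x unfolding row_def by auto
    have v1: "\<And>a. a < k \<Longrightarrow> valid_args k 1 [a]" unfolding valid_args_def by simp
    have kk: "snd (T_op k) row < k" using Tle[of row] assms(1) by linarith
    have L: "u (snd (T_op k) row) = 0" using Tle[of row] assms(3,4)
      by (metis le_neq_implies_less less_one)
    have A: "map (\<lambda>i. snd (T_op k) (map (\<lambda>j. x i j) [0..<fst (T_op k)])) [0..<1] = [snd (T_op k) row]"
      by (simp add: row_def)
    have E: "map (\<lambda>j. if valid_args k 1 (map (\<lambda>i. x i j) [0..<1]) then u (hd (map (\<lambda>i. x i j) [0..<1])) else 0) [0..<fst (T_op k)]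
        = map u row"
      unfolding row_def using x v1 by auto
    then show "(if valid_args k 1 (map (\<lambda>i. snd (T_op k) (map (\<lambda>j. x i j) [0..<fst (T_op k)])) [0..<1])
           then u (hd (map (\<lambda>i. snd (T_op k) (map (\<lambda>j. x i j) [0..<fst (T_op k)])) [0..<1])) else 0) =
          snd (T_op k) (map (\<lambda>j. if valid_args k 1 (map (\<lambda>i. x i j) [0..<1]) then u (hd (map (\<lambda>i. x i j) [0..<1])) else 0) [0..<fst (T_op k)])"
      unfolding E A
    proof -
      have 1: "valid_args k 1 [snd (T_op k) row]" using v1[OF kk] .
      have 2: "(if valid_args k 1 [snd (T_op k) row] then u (hd [snd (T_op k) row]) else 0) = 0"
        using 1 L by simp
      show "(if valid_args k 1 [snd (T_op k) row] then u (hd [snd (T_op k) row]) else 0) = snd (T_op k) (map u row)"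
        unfolding 2 using T_map_u[OF assms(1,3,4) rs] by simp
    qed
  qed
  then show ?thesis using op unfolding arity_part_def centralizer_def by auto
qed


lemma key:
  assumes "k \<ge> 3" "p \<in> centralizer k (arity_part (centralizer k {T_op k}) 1)"
    "\<forall>j. u j < k" "u 0 = 0" "u 1 = 0" "valid_args k (fst p) zs"
  shows "snd p (map u zs) = u (snd p zs)"
proof -
  let ?U = "(1::nat, \<lambda>xs. if valid_args k 1 xs then u (hd xs) else 0)"
  have c: "commutes k p ?U" using assms(2) U_in[OF assms(1,3,4,5)] unfolding centralizer_def by auto
  have op: "is_op k p" using assms(2) unfolding centralizer_def by auto
  have len: "length zs = fst p" and ss: "set zs \<subseteq> {..<k}"
    using assms(6) unfolding valid_args_def by auto
  have zk: "\<And>i. i < fst p \<Longrightarrow> zs ! i < k" using len ss by (metis lessThan_iff nth_mem subsetD)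
  have e: "snd p (map (\<lambda>i. snd ?U (map (\<lambda>j. zs ! i) [0..<fst ?U])) [0..<fst p])
      = snd ?U (map (\<lambda>j. snd p (map (\<lambda>i. zs ! i) [0..<fst p])) [0..<fst ?U])"
    using c[unfolded commutes_def Let_def, rule_format, of "\<lambda>i j. zs ! i"] zk by simp
  have m1: "map (\<lambda>i. zs ! i) [0..<fst p] = zs" using len by (metis map_nth)
  have m2: "map (\<lambda>i. snd ?U (map (\<lambda>j. zs ! i) [0..<fst ?U])) [0..<fst p] = map u zs"
  proof (rule nth_equalityI)
    show "length (map (\<lambda>i. snd ?U (map (\<lambda>j. zs ! i) [0..<fst ?U])) [0..<fst p]) = length (map u zs)"
      using len by simp
    fix i assume "i < length (map (\<lambda>i. snd ?U (map (\<lambda>j. zs ! i) [0..<fst ?U])) [0..<fst p])"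
    then have i: "i < fst p" by simp
    then show "map (\<lambda>i. snd ?U (map (\<lambda>j. zs ! i) [0..<fst ?U])) [0..<fst p] ! i = map u zs ! i"
      using zk[OF i] len by (simp add: valid_args_def)
  qed
  have fz: "snd p zs < k" using op assms(6) unfolding is_op_def by auto
  have "snd ?U (map (\<lambda>j. snd p zs) [0..<fst ?U]) = u (snd p zs)"
    using fz by (simp add: valid_args_def)
  then show ?thesis using e unfolding m1 m2 by simp
qed


lemma classify:
  assumes k: "k \<ge> 3" and n: "1 \<le> n" "n < k - 1"
    and pc: "p \<in> centralizer k (arity_part (centralizer k {T_op k}) 1)" and fp: "fst p = n"
  shows "p \<in> projections k n \<union> {const_zero n}"
proof -
  define f where "f = snd p"
  have op: "is_op k p" using pc unfolding centralizer_def by auto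
  have inv: "\<And>zs. \<not> valid_args k n zs \<Longrightarrow> f zs = 0" using op fp unfolding is_op_def f_def by auto
  have kf: "\<And>zs. valid_args k n zs \<Longrightarrow> f zs < k" using op fp unfolding is_op_def f_def by auto
  have K: "\<And>u zs. \<forall>j. u j < k \<Longrightarrow> u 0 = 0 \<Longrightarrow> u 1 = 0 \<Longrightarrow> valid_args k n zs \<Longrightarrow> f (map u zs) = u (f zs)"
    using key[OF k pc] fp unfolding f_def by auto
  define x0 where "x0 = [2..<n+2]"
  have lx0: "length x0 = n" unfolding x0_def length_upt by simp
  have nx0: "\<And>i. i < n \<Longrightarrow> x0 ! i = 2 + i" unfolding x0_def by (subst nth_upt) auto
  have sx0: "set x0 = {2..<n+2}" unfolding x0_def by (rule set_upt)
  have vx0: "valid_args k n x0" unfolding valid_args_def x0_def using n by auto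
  define y where "y = f x0"
  have yc: "y = 0 \<or> (\<exists>i<n. y = i + 2)"
  proof (rule ccontr)
    assume H: "\<not> ?thesis"
    have yn: "y \<notin> set x0"
    proof
      assume "y \<in> set x0"
      then have "2 \<le> y" "y < n+2" by (auto simp: sx0)
      then have "y - 2 < n \<and> y = (y - 2) + 2" by linarith
      then show False using H by blast
    qed
    define u where "u j = (if j \<in> set x0 then j else 0)" for j
    have uk: "\<forall>j. u j < k" unfolding u_def sx0 using n by auto
    have u0: "u 0 = 0" "u 1 = 0" unfolding u_def sx0 by auto
    have "map u x0 = x0" by (rule map_idI) (simp add: u_def)
    then have "y = u y" using K[OF uk u0 vx0] unfolding y_def by simp
    then have "y = 0" using yn unfolding u_def by simp
    then show False using H by simp
  qed
  have gen: "\<And>zs. valid_args k n zs \<Longrightarrow> f zs = (if 2 \<le> y \<and> y < n + 2 then zs ! (y - 2) else 0)"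
  proof -
    fix zs assume vz: "valid_args k n zs"
    then have len: "length zs = n" and ss: "set zs \<subseteq> {..<k}" unfolding valid_args_def by auto
    define u where "u j = (if 2 \<le> j \<and> j < n + 2 then zs ! (j - 2) else 0)" for j
    have uk: "\<forall>j. u j < k"
    proof
      fix j show "u j < k"
      proof (cases "2 \<le> j \<and> j < n + 2")
        case True
        then have "j - 2 < length zs" using len by linarith
        then have "zs ! (j - 2) \<in> {..<k}" using ss nth_mem by blast
        then show ?thesis using True unfolding u_def by simp
      next
        case False
        then show ?thesis using k unfolding u_def by auto
      qed
    qed
    have u0: "u 0 = 0" "u 1 = 0" unfolding u_def by auto
    have "map u x0 = zs"
    proof (rule nth_equalityI)
      show "length (map u x0) = length zs" using len lx0 by simp
      fix i assume "i < length (map u x0)"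
      then have i: "i < n" using lx0 by simp
      then have "map u x0 ! i = u (2 + i)" using lx0 nx0 by simp
      then show "map u x0 ! i = zs ! i" using i unfolding u_def by simp
    qed
    then have "f zs = u y" using K[OF uk u0 vx0] unfolding y_def by simp
    then show "f zs = (if 2 \<le> y \<and> y < n + 2 then zs ! (y - 2) else 0)" unfolding u_def .
  qed
  have pe: "p = (n, f)" using fp unfolding f_def by (metis prod.collapse)
  from yc show ?thesis
  proof
    assume "y = 0"
    have "f zs = 0" for zs
    proof (cases "valid_args k n zs")
      case True then show ?thesis using gen[OF True] \<open>y = 0\<close> by simp
    next
      case False then show ?thesis using inv by simp
    qed
    then have "f = (\<lambda>_. 0)" by (rule ext)
    then show ?thesis using pe unfolding const_zero_def by simp
  next
    assume "\<exists>i<n. y = i + 2"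
    then obtain i where i: "i < n" "y = i + 2" by auto
    have "f zs = (if valid_args k n zs then zs ! i else 0)" for zs
    proof (cases "valid_args k n zs")
      case True then show ?thesis using gen[OF True] i by simp
    next
      case False then show ?thesis using inv by simp
    qed
    then have "f = (\<lambda>xs. if valid_args k n xs then xs ! i else 0)" by (rule ext)
    then show ?thesis using pe i unfolding projections_def by auto
  qed
qed

theorem lemma3p6:
  fixes k n :: nat
  assumes "k \<ge> 3" and "1 \<le> n" and "n < k - 1"
  shows "arity_part (centralizer k (centralizer k {T_op k})) n
           = projections k n \<union> {const_zero n}
       \<and> arity_part (centralizer k (arity_part (centralizer k {T_op k}) 1)) n
           = projections k n \<union> {const_zero n}"
proof -
  have P: "projections k n \<union> {const_zero n} \<subseteq> arity_part (centralizer k (centralizer k {T_op k})) n"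
  proof
    fix p assume "p \<in> projections k n \<union> {const_zero n}"
    then show "p \<in> arity_part (centralizer k (centralizer k {T_op k})) n"
    proof
      assume "p \<in> projections k n"
      then obtain i where i: "i < n" "p = (n, \<lambda>xs. if valid_args k n xs then xs ! i else 0)"
        unfolding projections_def by auto
      have cm: "\<forall>q\<in>centralizer k {T_op k}. commutes k p q"
      proof
        fix q assume "q \<in> centralizer k {T_op k}"
        then have "is_op k q" unfolding centralizer_def by simp
        then show "commutes k p q" using proj_commutes[OF _ i(1)] i(2) by simp
      qed
      have op: "is_op k p" using proj_op[OF i(1)] i(2) by simp
      have fp: "fst p = n" using i(2) by simp
      show ?thesis using cm op fp by (simp add: arity_part_def centralizer_def)
    next
      assume "p \<in> {const_zero n}"
      then have pz: "p = const_zero n" by simp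
      have cm: "\<forall>q\<in>centralizer k {T_op k}. commutes k p q"
      proof
        fix q assume q: "q \<in> centralizer k {T_op k}"
        show "commutes k p q"
          unfolding pz commutes_def Let_def const_zero_def
          using zero_fix[OF assms(1) q] by (simp add: map_replicate_const)
      qed
      have op: "is_op k p" using cz_op[OF assms(2)] assms(1) pz by simp
      have fp: "fst p = n" using pz unfolding const_zero_def by simp
      show ?thesis using cm op fp by (simp add: arity_part_def centralizer_def)
    qed
  qed
  have M: "centralizer k (centralizer k {T_op k}) \<subseteq> centralizer k (arity_part (centralizer k {T_op k}) 1)"
    unfolding centralizer_def arity_part_def by auto
  have Q: "arity_part (centralizer k (arity_part (centralizer k {T_op k}) 1)) n \<subseteq> projections k n \<union> {const_zero n}"
    using classify[OF assms] unfolding arity_part_def by auto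
  have M': "arity_part (centralizer k (centralizer k {T_op k})) n \<subseteq> arity_part (centralizer k (arity_part (centralizer k {T_op k}) 1)) n"
    using M unfolding arity_part_def by auto
  have E2: "arity_part (centralizer k (arity_part (centralizer k {T_op k}) 1)) n = projections k n \<union> {const_zero n}"
    by (rule subset_antisym[OF Q]) (rule order_trans[OF P M'])
  have E1: "arity_part (centralizer k (centralizer k {T_op k})) n = projections k n \<union> {const_zero n}"
    by (rule subset_antisym[OF order_trans[OF M' Q] P])
  show ?thesis using E1 E2 by (rule conjI)
qed

end
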